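(* Let $R$ be a connected zero-sum-free semiring and $V$ a free $R$-module. The set of basis lines of $V$ does not depend on the choice of basis. Moreover, any $R$-module automorphism $f:V\to V$ induces a permutation $\sigma_f$ of the set of basis lines, sending the line spanned by a basis vector $v$ to $\mathrm{span}(f(v))$; and for two automorphisms $f,g$ one has $\sigma_{fg}=\sigma_f\sigma_g$.
   Context: All semirings are commutative. $R$ is zero-sum-free if $a+b=0$ implies $a=b=0$, and connected if $\mathrm{Spec}\,R$ is connected, equivalently $R$ has only trivial idempotents. Given a basis of $V$, a basis line is a submodule spanned by a single basis vector. *)

theory Defs
  imports Main
begin

definition zero_sum_free :: "'r::comm_semiring_1 itself \<Rightarrow> bool" where
  "zero_sum_free _ \<longleftrightarrow> (\<forall>a b::'r. a + b = 0 \<longrightarrow> a = 0 \<and> b = 0)"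

text \<open>Connected: Spec R is connected (in particular nonempty, so R is nontrivial),
  equivalently R has only the trivial idempotents 0 and 1.\<close>
definition connected_semiring :: "'r::comm_semiring_1 itself \<Rightarrow> bool" where
  "connected_semiring _ \<longleftrightarrow> (0::'r) \<noteq> 1 \<and> (\<forall>e::'r. e * e = e \<longrightarrow> e = 0 \<or> e = 1)"

definition semimodule :: "('r::comm_semiring_1 \<Rightarrow> 'v::comm_monoid_add \<Rightarrow> 'v) \<Rightarrow> bool" where
  "semimodule sc \<longleftrightarrow>
     (\<forall>r x y. sc r (x + y) = sc r x + sc r y) \<and>
     (\<forall>r q x. sc (r + q) x = sc r x + sc q x) \<and>
     (\<forall>r q x. sc (r * q) x = sc r (sc q x)) \<and>
     (\<forall>x. sc 1 x = x) \<and>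
     (\<forall>x. sc 0 x = 0) \<and>
     (\<forall>r. sc r 0 = 0)"

definition lin_comb :: "('r::comm_semiring_1 \<Rightarrow> 'v::comm_monoid_add \<Rightarrow> 'v) \<Rightarrow> 'v set \<Rightarrow> ('v \<Rightarrow> 'r) \<Rightarrow> 'v" where
  "lin_comb sc B c = (\<Sum>b\<in>{b\<in>B. c b \<noteq> 0}. sc (c b) b)"

definition fin_coeffs :: "'v set \<Rightarrow> ('v \<Rightarrow> 'r::comm_semiring_1) \<Rightarrow> bool" where
  "fin_coeffs B c \<longleftrightarrow> finite {b\<in>B. c b \<noteq> 0} \<and> (\<forall>b. b \<notin> B \<longrightarrow> c b = 0)"

definition is_basis :: "('r::comm_semiring_1 \<Rightarrow> 'v::comm_monoid_add \<Rightarrow> 'v) \<Rightarrow> 'v set \<Rightarrow> bool" where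
  "is_basis sc B \<longleftrightarrow> (\<forall>v. \<exists>!c. fin_coeffs B c \<and> lin_comb sc B c = v)"

definition free_module :: "('r::comm_semiring_1 \<Rightarrow> 'v::comm_monoid_add \<Rightarrow> 'v) \<Rightarrow> bool" where
  "free_module sc \<longleftrightarrow> semimodule sc \<and> (\<exists>B. is_basis sc B)"

definition span1 :: "('r::comm_semiring_1 \<Rightarrow> 'v::comm_monoid_add \<Rightarrow> 'v) \<Rightarrow> 'v \<Rightarrow> 'v set" where
  "span1 sc v = range (\<lambda>r. sc r v)"

definition basis_lines :: "('r::comm_semiring_1 \<Rightarrow> 'v::comm_monoid_add \<Rightarrow> 'v) \<Rightarrow> 'v set \<Rightarrow> 'v set set" where
  "basis_lines sc B = span1 sc ` B"

definition module_hom :: "('r::comm_semiring_1 \<Rightarrow> 'v::comm_monoid_add \<Rightarrow> 'v) \<Rightarrow> ('v \<Rightarrow> 'v) \<Rightarrow> bool" where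
  "module_hom sc f \<longleftrightarrow> (\<forall>x y. f (x + y) = f x + f y) \<and> (\<forall>r x. f (sc r x) = sc r (f x))"

definition module_aut :: "('r::comm_semiring_1 \<Rightarrow> 'v::comm_monoid_add \<Rightarrow> 'v) \<Rightarrow> ('v \<Rightarrow> 'v) \<Rightarrow> bool" where
  "module_aut sc f \<longleftrightarrow> module_hom sc f \<and> bij f"

definition induced_perm :: "('r::comm_semiring_1 \<Rightarrow> 'v::comm_monoid_add \<Rightarrow> 'v) \<Rightarrow> ('v \<Rightarrow> 'v) \<Rightarrow> 'v set \<Rightarrow> 'v set \<Rightarrow> 'v set" where
  "induced_perm sc f B L = (THE L'. \<exists>b\<in>B. L = span1 sc b \<and> L' = span1 sc (f b))"

end

theory Submission
  imports Defs
begin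

lemma sm_facts:
  assumes "semimodule sc"
  shows "sc r (x+y) = sc r x + sc r y" "sc (r+q) x = sc r x + sc q x"
    "sc (r*q) x = sc r (sc q x)" "sc 1 x = x" "sc 0 x = 0" "sc r 0 = 0"
  using assms unfolding semimodule_def by auto

lemma sc_sum_right:
  assumes "semimodule sc"
  shows "sc r (sum g A) = (\<Sum>i\<in>A. sc r (g i))"
  by (induction A rule: infinite_finite_induct) (simp_all add: sm_facts[OF assms])

lemma sc_sum_left:
  assumes "semimodule sc"
  shows "sc (sum g A) x = (\<Sum>i\<in>A. sc (g i) x)"
  by (induction A rule: infinite_finite_induct) (simp_all add: sm_facts[OF assms])

lemma lin_comb_superset:
  assumes "semimodule sc" "finite S" "{b\<in>B. c b \<noteq> 0} \<subseteq> S" "S \<subseteq> B"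
  shows "lin_comb sc B c = (\<Sum>b\<in>S. sc (c b) b)"
  unfolding lin_comb_def
proof (rule sum.mono_neutral_left)
  show "finite S" by fact
  show "{b \<in> B. c b \<noteq> 0} \<subseteq> S" by fact
  show "\<forall>i\<in>S - {b \<in> B. c b \<noteq> 0}. sc (c i) i = 0"
    using assms(4) by (auto simp: sm_facts[OF assms(1)])
qed

definition coord :: "('r::comm_semiring_1 \<Rightarrow> 'v::comm_monoid_add \<Rightarrow> 'v) \<Rightarrow> 'v set \<Rightarrow> 'v \<Rightarrow> 'v \<Rightarrow> 'r" where
  "coord sc B v = (THE c. fin_coeffs B c \<and> lin_comb sc B c = v)"

lemma coord:
  assumes "is_basis sc B"
  shows "fin_coeffs B (coord sc B v) \<and> lin_comb sc B (coord sc B v) = v"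
proof -
  have "\<exists>!c. fin_coeffs B c \<and> lin_comb sc B c = v" using assms by (simp add: is_basis_def)
  from theI'[OF this] show ?thesis unfolding coord_def .
qed

lemma coord_unique:
  assumes "is_basis sc B" "fin_coeffs B c" "lin_comb sc B c = v"
  shows "coord sc B v = c"
  unfolding coord_def by (rule the1_equality) (use assms in \<open>auto simp add: is_basis_def\<close>)

lemma coord_delta:
  assumes sm: "semimodule sc" and "is_basis sc B" "b \<in> B" and nt: "(0::'r::comm_semiring_1) \<noteq> 1"
  shows "coord sc B b = (\<lambda>x. if x = b then (1::'r) else 0)"
proof (rule coord_unique[OF assms(2)])
  have s: "{x\<in>B. (if x = b then (1::'r) else 0) \<noteq> 0} = {b}" using assms(3) nt by auto
  show "fin_coeffs B (\<lambda>x. if x = b then (1::'r) else 0)"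
    unfolding fin_coeffs_def s using assms(3) by auto
  show "lin_comb sc B (\<lambda>x. if x = b then (1::'r) else 0) = b"
    unfolding lin_comb_def s by (simp add: sm_facts[OF sm])
qed

lemma zsf_sum:
  assumes "zero_sum_free TYPE('r::comm_semiring_1)" "finite A" "sum f A = (0::'r)" "x \<in> A"
  shows "f x = 0"
  using assms(2,3,4)
proof (induction A rule: finite_induct)
  case empty then show ?case by simp
next
  case (insert a A)
  then have "f a + sum f A = 0" by simp
  then have "f a = 0 \<and> sum f A = 0" using assms(1) unfolding zero_sum_free_def by blast
  then show ?case using insert by auto
qed

lemma lemG:
  assumes sm: "semimodule sc" and nt: "(0::'r::comm_semiring_1) \<noteq> 1"
    and B: "is_basis sc B" and B': "is_basis sc B'" and b: "b \<in> B"
  shows "\<forall>x\<in>B. (\<Sum>b'\<in>{b'\<in>B'. coord sc B' b b' \<noteq> 0}. coord sc B' b b' * coord sc B b' x)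
             = (if x = b then (1::'r) else 0)"
proof -
  define c where "c = coord sc B' b"
  define S where "S = {b'\<in>B'. c b' \<noteq> 0}"
  define d where "d = coord sc B"
  define T where "T = (\<Union>b'\<in>S. {x\<in>B. d b' x \<noteq> 0})"
  have cS: "fin_coeffs B' c" "lin_comb sc B' c = b" using coord[OF B'] unfolding c_def by auto
  have finS: "finite S" using cS unfolding S_def fin_coeffs_def by auto
  have dS: "fin_coeffs B (d b')" "lin_comb sc B (d b') = b'" for b'
    using coord[OF B] unfolding d_def by auto
  have finT: "finite T" unfolding T_def using finS dS(1) unfolding fin_coeffs_def by auto
  have TB: "T \<subseteq> B" unfolding T_def by auto
  have hb': "b' = (\<Sum>x\<in>T. sc (d b' x) x)" if "b' \<in> S" for b'
  proof -
    have "b' = lin_comb sc B (d b')" using dS by simp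
    also have "\<dots> = (\<Sum>x\<in>T. sc (d b' x) x)"
      by (rule lin_comb_superset[OF sm finT _ TB]) (use that in \<open>auto simp: T_def\<close>)
    finally show ?thesis .
  qed
  define e where "e x = (\<Sum>b'\<in>S. c b' * d b' x)" for x
  have "b = (\<Sum>b'\<in>S. sc (c b') b')" using cS(2) unfolding lin_comb_def S_def by simp
  also have "\<dots> = (\<Sum>b'\<in>S. sc (c b') (\<Sum>x\<in>T. sc (d b' x) x))"
  proof (rule sum.cong[OF refl])
    fix b' assume "b' \<in> S"
    from hb'[OF this] show "sc (c b') b' = sc (c b') (\<Sum>x\<in>T. sc (d b' x) x)" by (rule arg_cong)
  qed
  also have "\<dots> = (\<Sum>b'\<in>S. \<Sum>x\<in>T. sc (c b' * d b' x) x)"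
    by (simp add: sc_sum_right[OF sm] sm_facts[OF sm])
  also have "\<dots> = (\<Sum>x\<in>T. \<Sum>b'\<in>S. sc (c b' * d b' x) x)" by (rule sum.swap)
  also have "\<dots> = (\<Sum>x\<in>T. sc (e x) x)" by (simp add: e_def sc_sum_left[OF sm])
  finally have be: "b = (\<Sum>x\<in>T. sc (e x) x)" .
  define e' where "e' x = (if x \<in> B then e x else 0)" for x
  have supp: "{x\<in>B. e' x \<noteq> 0} \<subseteq> T"
  proof
    fix x assume "x \<in> {x\<in>B. e' x \<noteq> 0}"
    then have xB: "x \<in> B" and "e x \<noteq> 0" by (auto simp: e'_def)
    then obtain b' where "b' \<in> S" "c b' * d b' x \<noteq> 0" unfolding e_def
      by (meson sum.neutral)
    then show "x \<in> T" using xB unfolding T_def by (metis (mono_tags, lifting) UN_iff mem_Collect_eq mult_zero_right)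
  qed
  have fe: "fin_coeffs B e'" unfolding fin_coeffs_def e'_def
    using finite_subset[OF supp finT] by (auto simp: e'_def)
  have "lin_comb sc B e' = (\<Sum>x\<in>T. sc (e' x) x)"
    by (rule lin_comb_superset[OF sm finT supp TB])
  also have "\<dots> = b" using be TB by (auto simp: e'_def intro!: sum.cong)
  finally have "coord sc B b = e'" using coord_unique[OF B fe] by simp
  then have "e' = (\<lambda>x. if x = b then 1 else 0)" using coord_delta[OF sm B b nt] by simp
  then have "\<forall>x\<in>B. e x = (if x = b then 1 else 0)"
    unfolding e'_def by (metis (full_types))
  then show ?thesis unfolding e_def S_def c_def d_def by blast
qed

lemma lines_sub:
  fixes sc :: "'r::comm_semiring_1 \<Rightarrow> 'v::comm_monoid_add \<Rightarrow> 'v"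
  assumes sm: "semimodule sc" and zsf: "zero_sum_free TYPE('r::comm_semiring_1)"
    and conn: "connected_semiring TYPE('r)"
    and B: "is_basis sc B" and B': "is_basis sc B'"
  shows "basis_lines sc B \<subseteq> basis_lines sc B'"
proof
  have nt: "(0::'r) \<noteq> 1" using conn unfolding connected_semiring_def by simp
  fix L assume "L \<in> basis_lines sc B"
  then obtain b where b: "b \<in> B" and L: "L = span1 sc b" unfolding basis_lines_def by auto
  define C :: "'v \<Rightarrow> 'v \<Rightarrow> 'r" where "C = coord sc B'"
  define D :: "'v \<Rightarrow> 'v \<Rightarrow> 'r" where "D = coord sc B"
  define S where "S = {b'\<in>B'. C b b' \<noteq> 0}"
  have finS: "finite S" using coord[OF B'] unfolding S_def C_def fin_coeffs_def by auto
  have a: "\<forall>x\<in>B. (\<Sum>b'\<in>S. C b b' * D b' x) = (if x = b then (1::'r) else 0)"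
    using lemG[OF sm nt B B' b] unfolding S_def C_def D_def by simp
  have i: "C b b' * D b' x = 0" if "x \<in> B" "x \<noteq> b" "b' \<in> B'" for x b'
  proof (cases "b' \<in> S")
    case True
    have "(\<Sum>b'\<in>S. C b b' * D b' x) = 0" using a that by simp
    then show ?thesis using zsf_sum[OF zsf finS] True by blast
  next
    case False then show ?thesis using that unfolding S_def by simp
  qed
  have idem: "(C b b' * D b' b) * (C b b' * D b' b) = C b b' * D b' b" if b': "b' \<in> B'" for b'
  proof (cases "D b' b = 0")
    case True then show ?thesis by simp
  next
    case False
    define U where "U = {x\<in>B. D b' x \<noteq> 0}"
    have finU: "finite U" using coord[OF B] unfolding U_def D_def fin_coeffs_def by auto
    have bU: "b \<in> U" using False b unfolding U_def by simp
    have one: "(\<Sum>x\<in>U. D b' x * C x b') = 1"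
      using lemG[OF sm nt B' B b'] b' unfolding U_def C_def D_def by simp
    have "C b b' * D b' b = C b b' * (\<Sum>x\<in>U. D b' x * C x b') * D b' b" using one by simp
    also have "\<dots> = (\<Sum>x\<in>U. (C b b' * D b' x) * C x b' * D b' b)"
      by (simp add: sum_distrib_left sum_distrib_right mult.assoc)
    also have "\<dots> = (C b b' * D b' b) * C b b' * D b' b + (\<Sum>x\<in>U-{b}. (C b b' * D b' x) * C x b' * D b' b)"
      by (rule sum.remove[OF finU bU])
    also have "(\<Sum>x\<in>U-{b}. (C b b' * D b' x) * C x b' * D b' b) = 0"
      using i b' unfolding U_def by (intro sum.neutral) auto
    finally show ?thesis by (simp add: mult.assoc)
  qed
  have s1: "(\<Sum>b'\<in>S. C b b' * D b' b) = 1" using a b by simp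
  have "\<not> (\<forall>x\<in>S. C b x * D x b = 0)"
  proof
    assume "\<forall>x\<in>S. C b x * D x b = 0"
    then have "(\<Sum>b'\<in>S. C b b' * D b' b) = 0" by (rule sum.neutral)
    then show False using s1 nt by simp
  qed
  then obtain b' where b'S: "b' \<in> S" and nz: "C b b' * D b' b \<noteq> 0" by blast
  have b'B: "b' \<in> B'" using b'S unfolding S_def by simp
  have cd1: "C b b' * D b' b = 1" using idem[OF b'B] nz conn unfolding connected_semiring_def by blast
  have dz: "D b' x = 0" if "x \<in> B" "x \<noteq> b" for x
  proof -
    have "D b' x = D b' x * (C b b' * D b' b)" using cd1 by simp
    also have "\<dots> = (C b b' * D b' x) * D b' b" by (simp add: mult_ac)
    finally show ?thesis using i[OF that b'B] by simp
  qed
  have "b' = lin_comb sc B (D b')" using coord[OF B] unfolding D_def by simp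
  also have "\<dots> = (\<Sum>x\<in>{b}. sc (D b' x) x)"
    by (rule lin_comb_superset[OF sm]) (use b dz in auto)
  finally have b'eq: "b' = sc (D b' b) b" by simp
  have "b = sc (C b b' * D b' b) b" using cd1 by (simp add: sm_facts[OF sm])
  also have "\<dots> = sc (C b b') (sc (D b' b) b)" by (rule sm_facts(3)[OF sm])
  finally have beq: "b = sc (C b b') b'" using b'eq by simp
  have sub: "span1 sc x \<subseteq> span1 sc y" if "x = sc k y" for x y k
  proof
    fix z assume "z \<in> span1 sc x"
    then obtain r where "z = sc r x" unfolding span1_def by auto
    then have "z = sc (r * k) y" using that by (simp add: sm_facts(3)[OF sm])
    then show "z \<in> span1 sc y" unfolding span1_def by auto
  qed
  have "span1 sc b = span1 sc b'" using sub[OF beq] sub[OF b'eq] by auto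
  then show "L \<in> basis_lines sc B'" using L b'B unfolding basis_lines_def by auto
qed

lemma span1_image:
  assumes "module_hom sc f"
  shows "span1 sc (f b) = f ` span1 sc b"
  using assms unfolding span1_def module_hom_def by (simp add: image_image)

lemma hom_zero:
  assumes sm: "semimodule sc" and h: "module_hom sc f"
  shows "f 0 = 0"
proof -
  have "f 0 = f (sc 0 0)" by (simp add: sm_facts[OF sm])
  also have "\<dots> = sc 0 (f 0)" using h unfolding module_hom_def by blast
  also have "\<dots> = 0" by (simp add: sm_facts[OF sm])
  finally show ?thesis .
qed

lemma hom_sum:
  assumes sm: "semimodule sc" and h: "module_hom sc f"
  shows "f (sum g A) = (\<Sum>i\<in>A. f (g i))"
  by (induction A rule: infinite_finite_induct)
     (use hom_zero[OF sm h] h in \<open>simp_all add: module_hom_def\<close>)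

lemma aut_basis:
  fixes sc :: "'r::comm_semiring_1 \<Rightarrow> 'v::comm_monoid_add \<Rightarrow> 'v"
  assumes sm: "semimodule sc" and f: "module_aut sc f" and B: "is_basis sc B"
  shows "is_basis sc (f ` B)"
  unfolding is_basis_def
proof
  fix v
  have h: "module_hom sc f" and bj: "bij f" using f unfolding module_aut_def by auto
  have inj: "inj f" using bj bij_is_inj by blast
  have fsc: "f (sc r x) = sc r (f x)" for r x using h unfolding module_hom_def by blast
  have key: "f (lin_comb sc B (c \<circ> f)) = lin_comb sc (f ` B) c" if "fin_coeffs (f ` B) c" for c
  proof -
    have e: "{x \<in> f ` B. c x \<noteq> 0} = f ` {b\<in>B. (c \<circ> f) b \<noteq> 0}" by auto
    have "f (lin_comb sc B (c \<circ> f)) = (\<Sum>b\<in>{b\<in>B. (c \<circ> f) b \<noteq> 0}. sc (c (f b)) (f b))"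
      unfolding lin_comb_def by (simp add: hom_sum[OF sm h] fsc)
    also have "\<dots> = lin_comb sc (f ` B) c" unfolding lin_comb_def e
      by (subst sum.reindex) (use inj in \<open>auto simp: inj_on_def\<close>)
    finally show ?thesis .
  qed
  have fc: "fin_coeffs B (c \<circ> f)" if "fin_coeffs (f ` B) c" for c
  proof -
    have "{b\<in>B. (c \<circ> f) b \<noteq> 0} \<subseteq> f -` {x \<in> f ` B. c x \<noteq> 0}" by auto
    moreover have "finite (f -` {x \<in> f ` B. c x \<noteq> 0})"
      using that inj unfolding fin_coeffs_def by (intro finite_vimageI) auto
    ultimately show ?thesis using that inj unfolding fin_coeffs_def
      by (auto intro: finite_subset simp: inj_image_mem_iff)
  qed
  define c0 where "c0 = coord sc B (inv f v)"
  define c where "c x = (if x \<in> f ` B then c0 (inv f x) else 0)" for x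
  have c0: "fin_coeffs B c0" "lin_comb sc B c0 = inv f v" using coord[OF B] unfolding c0_def by auto
  have cf: "c \<circ> f = c0"
  proof
    fix b show "(c \<circ> f) b = c0 b"
      using c0(1) inj unfolding c_def fin_coeffs_def by (auto simp: inj_image_mem_iff)
  qed
  have fcc: "fin_coeffs (f ` B) c"
  proof -
    have "{x \<in> f ` B. c x \<noteq> 0} = f ` {b\<in>B. c0 b \<noteq> 0}" using inj by (auto simp: c_def inj_eq)
    then show ?thesis using c0(1) unfolding fin_coeffs_def by (auto simp: c_def)
  qed
  show "\<exists>!c. fin_coeffs (f ` B) c \<and> lin_comb sc (f ` B) c = v"
  proof (rule ex1I[of _ c])
    show "fin_coeffs (f ` B) c \<and> lin_comb sc (f ` B) c = v"
      using fcc key[OF fcc] cf c0(2) bj by (simp add: bij_inv_eq_iff bij_is_surj surj_f_inv_f)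
  next
    fix c' assume a: "fin_coeffs (f ` B) c' \<and> lin_comb sc (f ` B) c' = v"
    then have "f (lin_comb sc B (c' \<circ> f)) = v" using key by auto
    then have "lin_comb sc B (c' \<circ> f) = inv f v" using inj by (auto simp: inv_f_eq)
    then have "c' \<circ> f = c0" using coord_unique[OF B fc] a unfolding c0_def by auto
    then have "c' \<circ> f = c \<circ> f" using cf by simp
    then show "c' = c"
    proof -
      assume ff: "c' \<circ> f = c \<circ> f"
      show "c' = c"
      proof
        fix x show "c' x = c x"
        proof (cases "x \<in> f ` B")
          case True then obtain b where "x = f b" by auto
          then show ?thesis using ff by (metis comp_apply)
        next
          case False then show ?thesis using a unfolding fin_coeffs_def c_def by auto
        qed
      qed
    qed
  qed
qed

lemma induced_eq:
  assumes h: "module_hom sc f" and b: "b \<in> B"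
  shows "induced_perm sc f B (span1 sc b) = span1 sc (f b)"
  unfolding induced_perm_def
proof (rule the_equality)
  show "\<exists>b0\<in>B. span1 sc b = span1 sc b0 \<and> span1 sc (f b) = span1 sc (f b0)" using b by auto
next
  fix L' assume "\<exists>b0\<in>B. span1 sc b = span1 sc b0 \<and> L' = span1 sc (f b0)"
  then obtain b0 where "span1 sc b = span1 sc b0" "L' = span1 sc (f b0)" by auto
  then show "L' = span1 sc (f b)" using span1_image[OF h] by metis
qed

lemma induced_img:
  assumes h: "module_hom sc f" and L: "L \<in> basis_lines sc B"
  shows "induced_perm sc f B L = f ` L"
  using L induced_eq[OF h] span1_image[OF h] unfolding basis_lines_def by auto

theorem lemma3p8:
  fixes sc :: "'r::comm_semiring_1 \<Rightarrow> 'v::comm_monoid_add \<Rightarrow> 'v"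
  assumes zsf: "zero_sum_free TYPE('r)"
    and conn: "connected_semiring TYPE('r)"
    and free: "free_module sc"
  shows
    "(\<forall>B B'. is_basis sc B \<longrightarrow> is_basis sc B' \<longrightarrow> basis_lines sc B = basis_lines sc B')
     \<and> (\<forall>f B B'. module_aut sc f \<longrightarrow> is_basis sc B \<longrightarrow> is_basis sc B' \<longrightarrow>
           (\<forall>b\<in>B. \<forall>b'\<in>B'. span1 sc b = span1 sc b' \<longrightarrow> span1 sc (f b) = span1 sc (f b')))
     \<and> (\<forall>f B. module_aut sc f \<longrightarrow> is_basis sc B \<longrightarrow>
           bij_betw (induced_perm sc f B) (basis_lines sc B) (basis_lines sc B)
           \<and> (\<forall>b\<in>B. induced_perm sc f B (span1 sc b) = span1 sc (f b)))
     \<and> (\<forall>f g B. module_aut sc f \<longrightarrow> module_aut sc g \<longrightarrow> is_basis sc B \<longrightarrow>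
           (\<forall>L\<in>basis_lines sc B.
              induced_perm sc (f \<circ> g) B L = induced_perm sc f B (induced_perm sc g B L)))"
proof -
  have sm: "semimodule sc" using free unfolding free_module_def by simp
  have P1: "\<forall>B B'. is_basis sc B \<longrightarrow> is_basis sc B' \<longrightarrow> basis_lines sc B = basis_lines sc B'"
    using lines_sub[OF sm zsf conn] by blast
  have hom: "module_hom sc f" if "module_aut sc f" for f using that unfolding module_aut_def by simp
  have limg: "(\<lambda>L. f ` L) ` basis_lines sc B = basis_lines sc B"
    if "module_aut sc f" "is_basis sc B" for f B
  proof -
    have "(\<lambda>L. f ` L) ` basis_lines sc B = basis_lines sc (f ` B)"
      unfolding basis_lines_def using span1_image[OF hom[OF that(1)]] by (auto simp: image_image)
    also have "\<dots> = basis_lines sc B" using P1 aut_basis[OF sm that] that(2) by blast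
    finally show ?thesis .
  qed
  have P3: "bij_betw (induced_perm sc f B) (basis_lines sc B) (basis_lines sc B)"
    if "module_aut sc f" "is_basis sc B" for f B
  proof -
    have "bij_betw (\<lambda>L. f ` L) (basis_lines sc B) (basis_lines sc B)"
    proof (rule bij_betw_imageI)
      have "inj f" using that unfolding module_aut_def using bij_is_inj by blast
      then show "inj_on (\<lambda>L. f ` L) (basis_lines sc B)" by (auto simp: inj_on_def inj_image_eq_iff)
      show "(\<lambda>L. f ` L) ` basis_lines sc B = basis_lines sc B" by (rule limg[OF that])
    qed
    moreover have "\<forall>L\<in>basis_lines sc B. induced_perm sc f B L = f ` L"
      using induced_img[OF hom[OF that(1)]] by blast
    ultimately show ?thesis using bij_betw_cong[of "basis_lines sc B" "induced_perm sc f B" "\<lambda>L. f ` L"] by simp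
  qed
  have P4: "induced_perm sc (f \<circ> g) B L = induced_perm sc f B (induced_perm sc g B L)"
    if "module_aut sc f" "module_aut sc g" "is_basis sc B" "L \<in> basis_lines sc B" for f g B L
  proof -
    have hfg: "module_hom sc (f \<circ> g)" using hom[OF that(1)] hom[OF that(2)] unfolding module_hom_def by simp
    have gL: "g ` L \<in> basis_lines sc B" using limg[OF that(2,3)] that(4) by blast
    show ?thesis using induced_img[OF hfg that(4)] induced_img[OF hom[OF that(2)] that(4)]
        induced_img[OF hom[OF that(1)] gL] by (simp add: image_comp)
  qed
  have P2: "span1 sc (f b) = span1 sc (f b')" if "module_aut sc f" "span1 sc b = span1 sc b'" for f b b'
    using span1_image[OF hom[OF that(1)]] that(2) by simp
  show ?thesis
  proof (intro conjI)
    show "\<forall>B B'. is_basis sc B \<longrightarrow> is_basis sc B' \<longrightarrow> basis_lines sc B = basis_lines sc B'" by (rule P1)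
    show "\<forall>f B B'. module_aut sc f \<longrightarrow> is_basis sc B \<longrightarrow> is_basis sc B' \<longrightarrow>
           (\<forall>b\<in>B. \<forall>b'\<in>B'. span1 sc b = span1 sc b' \<longrightarrow> span1 sc (f b) = span1 sc (f b'))"
      using P2 by blast
    show "\<forall>f B. module_aut sc f \<longrightarrow> is_basis sc B \<longrightarrow>
           bij_betw (induced_perm sc f B) (basis_lines sc B) (basis_lines sc B)
           \<and> (\<forall>b\<in>B. induced_perm sc f B (span1 sc b) = span1 sc (f b))"
      using P3 induced_eq[OF hom] by blast
    show "\<forall>f g B. module_aut sc f \<longrightarrow> module_aut sc g \<longrightarrow> is_basis sc B \<longrightarrow>
           (\<forall>L\<in>basis_lines sc B.
              induced_perm sc (f \<circ> g) B L = induced_perm sc f B (induced_perm sc g B L))"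
      using P4 by blast
  qed
qed

end
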